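(* Let $\Lambda=(\lambda_1,\lambda_2)\in(0,\infty)^2$, $\phi\in[0,1)$ and $0\le\theta<\theta'\le 1$. Let $(X_1,X_2)\sim\mathcal{BZIP}^-(\Lambda,\theta,\phi)$ and $(X_1',X_2')\sim\mathcal{BZIP}^-(\Lambda,\theta',\phi)$. Then $(X_1',X_2')\prec_{PQD}(X_1,X_2)$, i.e. $H^-_{\Lambda,\phi,\theta'}(x_1,x_2)\le H^-_{\Lambda,\phi,\theta}(x_1,x_2)$ for all $(x_1,x_2)\in\mathbb{R}^2$, where $H^-_{\Lambda,\phi,\vartheta}$ is the joint distribution function of $\mathcal{BZIP}^-(\Lambda,\vartheta,\phi)$.
   Context: For $\mu>0$, $G_\mu$ denotes the distribution function of the Poisson distribution with mean $\mu$, and $G_\mu^{-1}(u)=\inf\{x\in\mathbb{N}:G_\mu(x)\ge u\}$ its quantile function (for $\mu=0$, $G_0^{-1}\equiv 0$). The model $\mathcal{BZIP}^{\pm}(\Lambda,\theta,\phi)$, with $\Lambda=(\lambda_1,\lambda_2)\in(0,\infty)^2$, $\theta\in[0,1]$, $\phi\in[0,1)$, is the law of $(X_1,X_2)=W\,(T_1,T_2)$, where: $W\sim$ Bernoulli$(1-\phi)$; $T_j=Y_j+Z_j$ for $j=1,2$; $Y_j\sim\mathcal{P}((1-\theta)\lambda_j)$; $U\sim\mathcal U(0,1)$; in $\mathcal{BZIP}^+$, $(Z_1,Z_2)=(G^{-1}_{\theta\lambda_1}(U),G^{-1}_{\theta\lambda_2}(U))$, and in $\mathcal{BZIP}^-$,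 $(Z_1,Z_2)=(G^{-1}_{\theta\lambda_1}(U),G^{-1}_{\theta\lambda_2}(1-U))$; $W$, $Y_1$, $Y_2$, $U$ are mutually independent. For random pairs with the same marginals, $(A_1,A_2)\prec_{PQD}(B_1,B_2)$ means $P(A_1\le x_1,A_2\le x_2)\le P(B_1\le x_1,B_2\le x_2)$ for all $x_1,x_2$. *)

theory Defs
  imports "HOL-Probability.Probability"
begin

definition pois :: "real \<Rightarrow> nat pmf" where
  "pois mu = (if mu = 0 then return_pmf 0 else poisson_pmf mu)"

definition pois_cdf :: "real \<Rightarrow> nat \<Rightarrow> real" where
  "pois_cdf mu x = measure_pmf.prob (pois mu) {..x}"

definition pois_quantile :: "real \<Rightarrow> real \<Rightarrow> nat" where
  "pois_quantile mu u = (if mu = 0 then 0 else Inf {x::nat. u \<le> pois_cdf mu x})"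

definition bzip_space :: "real \<times> real \<Rightarrow> real \<Rightarrow> real \<Rightarrow> ((bool \<times> nat \<times> nat) \<times> real) measure" where
  "bzip_space Lam theta phi =
     measure_pmf (pair_pmf (bernoulli_pmf (1 - phi))
                   (pair_pmf (pois ((1 - theta) * fst Lam)) (pois ((1 - theta) * snd Lam))))
     \<Otimes>\<^sub>M uniform_measure lborel {0..1::real}"

text \<open>The random vector (X1, X2) = W (Y1 + Z1, Y2 + Z2) of BZIP^- (counter-monotone Z).\<close>
definition bzip_minus_rv :: "real \<times> real \<Rightarrow> real \<Rightarrow> (bool \<times> nat \<times> nat) \<times> real \<Rightarrow> nat \<times> nat" where
  "bzip_minus_rv Lam theta \<omega> =
     (case \<omega> of ((w, y1, y2), u) \<Rightarrow>
        if w then (y1 + pois_quantile (theta * fst Lam) u,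
                   y2 + pois_quantile (theta * snd Lam) (1 - u))
        else (0, 0))"

definition H_minus :: "real \<times> real \<Rightarrow> real \<Rightarrow> real \<Rightarrow> real \<Rightarrow> real \<Rightarrow> real" where
  "H_minus Lam phi theta x1 x2 =
     measure (bzip_space Lam theta phi)
       {\<omega> \<in> space (bzip_space Lam theta phi).
          real (fst (bzip_minus_rv Lam theta \<omega>)) \<le> x1 \<and>
          real (snd (bzip_minus_rv Lam theta \<omega>)) \<le> x2}"

end

theory Submission
  imports Defs
begin


definition pf :: "real \<Rightarrow> nat \<Rightarrow> real" where
  "pf mu n = exp (- mu) * mu ^ n / fact n"

definition pG :: "real \<Rightarrow> nat \<Rightarrow> real" where
  "pG mu c = (\<Sum>k\<le>c. pf mu k)"

lemma pf_nonneg: "0 \<le> mu \<Longrightarrow> 0 \<le> pf mu n"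
  by (simp add: pf_def)

lemma pG_nonneg: "0 \<le> mu \<Longrightarrow> 0 \<le> pG mu n"
  by (simp add: pG_def pf_nonneg sum_nonneg)

lemma pf_conv:
  assumes "0 \<le> a" "0 \<le> b"
  shows "pf (a + b) n = (\<Sum>k\<le>n. pf a k * pf b (n - k))"
proof -
  have "pf (a + b) n = exp (-a) * exp (-b) * (\<Sum>k\<le>n. of_nat (n choose k) * a ^ k * b ^ (n - k)) / fact n"
    by (simp add: pf_def binomial_ring exp_add[symmetric])
  also have "\<dots> = (\<Sum>k\<le>n. exp (-a) * exp (-b) * (of_nat (n choose k) * a ^ k * b ^ (n - k)) / fact n)"
    by (simp add: sum_distrib_left sum_divide_distrib)
  also have "\<dots> = (\<Sum>k\<le>n. pf a k * pf b (n - k))"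
  proof (rule sum.cong)
    fix k assume "k \<in> {..n}"
    then have kn: "k \<le> n" by simp
    have "(fact n :: real) = of_nat (fact k * fact (n - k) * (n choose k))"
      by (simp only: binomial_fact_lemma[OF kn] of_nat_fact)
    then have "fact n = (of_nat (n choose k) :: real) * fact k * fact (n - k)"
      by simp
    then show "exp (-a) * exp (-b) * (of_nat (n choose k) * a ^ k * b ^ (n - k)) / fact n = pf a k * pf b (n - k)"
      using kn by (simp add: pf_def field_simps)
  qed simp
  finally show ?thesis .
qed

lemma conv1D:
  fixes q r h :: "nat \<Rightarrow> real"
  shows "(\<Sum>y\<le>a. (\<Sum>v\<le>y. q v * r (y - v)) * h (a - y)) =
         (\<Sum>v\<le>a. q v * (\<Sum>s\<le>a - v. r s * h (a - v - s)))"
proof -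
  have "(\<Sum>y\<le>a. (\<Sum>v\<le>y. q v * r (y - v)) * h (a - y)) =
        (\<Sum>y\<le>a. \<Sum>v\<in>{v\<in>{..a}. v \<le> y}. q v * r (y - v) * h (a - y))"
    by (intro sum.cong) (auto simp: sum_distrib_right intro!: sum.cong)
  also have "\<dots> = (\<Sum>v\<le>a. \<Sum>y\<in>{y\<in>{..a}. v \<le> y}. q v * r (y - v) * h (a - y))"
    by (rule sum.swap_restrict) auto
  also have "\<dots> = (\<Sum>v\<le>a. q v * (\<Sum>s\<le>a - v. r s * h (a - v - s)))"
  proof (rule sum.cong)
    fix v assume "v \<in> {..a}"
    then have va: "v \<le> a" by simp
    have "{y\<in>{..a}. v \<le> y} = {0 + v..(a - v) + v}" using va by auto
    then have "(\<Sum>y\<in>{y\<in>{..a}. v \<le> y}. q v * r (y - v) * h (a - y)) =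
        (\<Sum>s\<in>{0..a - v}. q v * r (s + v - v) * h (a - (s + v)))"
      by (simp only: sum.shift_bounds_cl_nat_ivl)
    also have "\<dots> = q v * (\<Sum>s\<le>a - v. r s * h (a - v - s))"
      by (simp add: sum_distrib_left atMost_atLeast0 mult.assoc diff_diff_eq add.commute)
    finally show "(\<Sum>y\<in>{y\<in>{..a}. v \<le> y}. q v * r (y - v) * h (a - y)) = q v * (\<Sum>s\<le>a - v. r s * h (a - v - s))" .
  qed simp
  finally show ?thesis .
qed

lemma pG_conv:
  assumes "0 \<le> a" "0 \<le> b"
  shows "pG (a + b) c = (\<Sum>v\<le>c. pf b v * pG a (c - v))"
proof -
  have "pG (a + b) c = (\<Sum>y\<le>c. (\<Sum>v\<le>y. pf b v * pf a (y - v)) * (\<lambda>_. 1) (c - y))"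
    unfolding pG_def using pf_conv[of b a] assms by (simp add: add.commute)
  also have "\<dots> = (\<Sum>v\<le>c. pf b v * pG a (c - v))"
    by (subst conv1D) (simp add: pG_def)
  finally show ?thesis .
qed

lemma pmf_pois: "0 \<le> mu \<Longrightarrow> pmf (pois mu) k = pf mu k"
  by (auto simp: pois_def pf_def indicator_def)

lemma pois_cdf_pG: "0 \<le> mu \<Longrightarrow> pois_cdf mu c = pG mu c"
  by (simp add: pois_cdf_def pG_def measure_measure_pmf_finite pmf_pois)

lemma pG_le1: "0 \<le> mu \<Longrightarrow> pG mu c \<le> 1"
  using measure_pmf.prob_le_1[of "pois mu" "{..c}"] by (simp add: pois_cdf_pG[symmetric] pois_cdf_def)

definition Wf :: "real \<Rightarrow> real \<Rightarrow> nat \<Rightarrow> nat \<Rightarrow> real" where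
  "Wf m1 m2 c d = max 0 (pG m1 c + pG m2 d - 1)"

lemma keyK:
  assumes "0 \<le> m1" "0 \<le> m2" "0 \<le> d1" "0 \<le> d2"
  shows "Wf (m1 + d1) (m2 + d2) c d \<le>
    (\<Sum>s1\<le>c. pf d1 s1 * (\<Sum>s2\<le>d. pf d2 s2 * Wf m1 m2 (c - s1) (d - s2)))"
    (is "_ \<le> ?R")
proof -
  have R0: "0 \<le> ?R"
    using assms by (auto intro!: sum_nonneg mult_nonneg_nonneg pf_nonneg simp: Wf_def)
  define A where "A = (\<Sum>s1\<le>c. pf d1 s1 * pG m1 (c - s1))"
  define B where "B = (\<Sum>s2\<le>d. pf d2 s2 * pG m2 (d - s2))"
  define R1 where "R1 = pG d1 c"
  define R2 where "R2 = pG d2 d"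
  have A: "A = pG (m1 + d1) c" unfolding A_def using pG_conv[of m1 d1] assms by simp
  have B: "B = pG (m2 + d2) d" unfolding B_def using pG_conv[of m2 d2] assms by simp
  have AR1: "A \<le> R1" unfolding A_def R1_def pG_def[of d1]
    using assms by (intro sum_mono) (auto intro!: mult_left_le pG_le1 pf_nonneg)
  have BR2: "B \<le> R2" unfolding B_def R2_def pG_def[of d2]
    using assms by (intro sum_mono) (auto intro!: mult_left_le pG_le1 pf_nonneg)
  have R1le: "R1 \<le> 1" "R2 \<le> 1" unfolding R1_def R2_def using assms by (auto intro!: pG_le1)
  have "?R \<ge> (\<Sum>s1\<le>c. pf d1 s1 * (\<Sum>s2\<le>d. pf d2 s2 * (pG m1 (c - s1) + pG m2 (d - s2) - 1)))"
    using assms by (intro sum_mono mult_left_mono) (auto simp: Wf_def pf_nonneg)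
  also have "(\<Sum>s1\<le>c. pf d1 s1 * (\<Sum>s2\<le>d. pf d2 s2 * (pG m1 (c - s1) + pG m2 (d - s2) - 1)))
      = A * R2 + R1 * B - R1 * R2"
    unfolding A_def B_def R1_def R2_def pG_def[of d1] pG_def[of d2]
    by (simp add: algebra_simps sum_distrib_left sum_distrib_right sum.distrib sum_subtractf)
      (simp add: sum.swap[of _ "{..d}" "{..c}"])
  finally have RA: "A * R2 + R1 * B - R1 * R2 \<le> ?R" .
  have "A * (R2 - 1) \<ge> R1 * (R2 - 1)" using AR1 R1le by (intro mult_right_mono_neg) auto
  moreover have "B * (R1 - 1) \<ge> R2 * (R1 - 1)" using BR2 R1le by (intro mult_right_mono_neg) auto
  moreover have "(1 - R1) * (1 - R2) \<ge> 0" using R1le by simp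
  ultimately have "A + B - 1 \<le> A * R2 + R1 * B - R1 * R2" by (simp add: algebra_simps)
  then show ?thesis using RA R0 A B unfolding Wf_def by simp
qed

definition St :: "real \<Rightarrow> real \<Rightarrow> real \<Rightarrow> nat \<Rightarrow> nat \<Rightarrow> real" where
  "St L1 L2 t a b = (\<Sum>y1\<le>a. pf ((1 - t) * L1) y1 *
      (\<Sum>y2\<le>b. pf ((1 - t) * L2) y2 * Wf (t * L1) (t * L2) (a - y1) (b - y2)))"

lemma St_mono:
  assumes L: "0 \<le> L1" "0 \<le> L2" and t: "0 \<le> t" "t \<le> t'" "t' \<le> 1"
  shows "St L1 L2 t' a b \<le> St L1 L2 t a b"
proof -
  define q1 where "q1 = pf ((1 - t') * L1)"
  define q2 where "q2 = pf ((1 - t') * L2)"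
  define r1 where "r1 = pf ((t' - t) * L1)"
  define r2 where "r2 = pf ((t' - t) * L2)"
  define W where "W = Wf (t * L1) (t * L2)"
  have q0: "\<And>n. 0 \<le> q1 n" "\<And>n. 0 \<le> q2 n" unfolding q1_def q2_def using L t by (auto intro!: pf_nonneg)
  have e1: "(1 - t) * L1 = (1 - t') * L1 + (t' - t) * L1" "(1 - t) * L2 = (1 - t') * L2 + (t' - t) * L2"
    "t' * L1 = t * L1 + (t' - t) * L1" "t' * L2 = t * L2 + (t' - t) * L2"
    by (simp_all add: algebra_simps)
  have c1: "pf ((1 - t) * L1) y = (\<Sum>v\<le>y. q1 v * r1 (y - v))" for y
    unfolding q1_def r1_def e1(1) using L t by (intro pf_conv) auto
  have c2: "pf ((1 - t) * L2) y = (\<Sum>v\<le>y. q2 v * r2 (y - v))" for y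
    unfolding q2_def r2_def e1(2) using L t by (intro pf_conv) auto
  define H2 where "H2 c = (\<Sum>v2\<le>b. q2 v2 * (\<Sum>s2\<le>b - v2. r2 s2 * W c (b - v2 - s2)))" for c
  have "St L1 L2 t a b = (\<Sum>y1\<le>a. (\<Sum>v\<le>y1. q1 v * r1 (y1 - v)) *
      (\<Sum>y2\<le>b. (\<Sum>v\<le>y2. q2 v * r2 (y2 - v)) * W (a - y1) (b - y2)))"
    unfolding St_def W_def c1 c2 ..
  also have "\<dots> = (\<Sum>y1\<le>a. (\<Sum>v\<le>y1. q1 v * r1 (y1 - v)) * H2 (a - y1))"
    unfolding H2_def by (subst conv1D) (rule refl)
  also have "\<dots> = (\<Sum>v1\<le>a. q1 v1 * (\<Sum>s1\<le>a - v1. r1 s1 * H2 (a - v1 - s1)))"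
    by (rule conv1D)
  finally have St1: "St L1 L2 t a b = (\<Sum>v1\<le>a. q1 v1 * (\<Sum>s1\<le>a - v1. r1 s1 * H2 (a - v1 - s1)))" .
  have St2: "St L1 L2 t' a b = (\<Sum>v1\<le>a. q1 v1 * (\<Sum>v2\<le>b. q2 v2 *
      Wf (t * L1 + (t' - t) * L1) (t * L2 + (t' - t) * L2) (a - v1) (b - v2)))"
    unfolding St_def q1_def q2_def e1(3,4) ..
  show ?thesis
    unfolding St1 St2
  proof (intro sum_mono mult_left_mono q0)
    fix v1 assume "v1 \<in> {..a}"
    define c where "c = a - v1"
    have "(\<Sum>s1\<le>c. r1 s1 * H2 (c - s1)) =
        (\<Sum>v2\<le>b. q2 v2 * (\<Sum>s1\<le>c. r1 s1 * (\<Sum>s2\<le>b - v2. r2 s2 * W (c - s1) (b - v2 - s2))))"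
      unfolding H2_def by (simp add: sum_distrib_left sum.swap[of _ "{..c}" "{..b}"] algebra_simps)
    also have "\<dots> \<ge> (\<Sum>v2\<le>b. q2 v2 *
      Wf (t * L1 + (t' - t) * L1) (t * L2 + (t' - t) * L2) c (b - v2))"
      unfolding W_def r1_def r2_def using L t
      by (intro sum_mono mult_left_mono q0 keyK) auto
    finally show "(\<Sum>v2\<le>b. q2 v2 *
      Wf (t * L1 + (t' - t) * L1) (t * L2 + (t' - t) * L2) (a - v1) (b - v2))
      \<le> (\<Sum>s1\<le>a - v1. r1 s1 * H2 (a - v1 - s1))"
      unfolding c_def .
  qed
qed



lemma pG_zero: "pG 0 k = 1"
  proof -
  have "pG 0 k = (\<Sum>j\<le>k. if j = 0 then 1 else 0)"
    unfolding pG_def pf_def by (intro sum.cong) (auto simp: power_0_left)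
  then show ?thesis by simp
qed

lemma pois_cdf_mono: "k \<le> k' \<Longrightarrow> pois_cdf mu k \<le> pois_cdf mu k'"
  unfolding pois_cdf_def by (intro measure_pmf.finite_measure_mono) auto

lemma pois_cdf_lim: "(\<lambda>k. pois_cdf mu k) \<longlonglongrightarrow> 1"
proof -
  have "(\<lambda>i. measure_pmf.prob (pois mu) {..i}) \<longlonglongrightarrow> measure_pmf.prob (pois mu) (\<Union>i. {..i})"
    by (intro measure_pmf.finite_Lim_measure_incseq) (auto simp: incseq_def)
  moreover have "(\<Union>i. {..i::nat}) = UNIV" by auto
  ultimately show ?thesis by (simp add: pois_cdf_def)
qed


lemma pois_quantile_iff:
  assumes mu: "0 \<le> mu" and u: "0 < u" "u < 1"
  shows "pois_quantile mu u \<le> k \<longleftrightarrow> u \<le> pois_cdf mu k"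
proof (cases "mu = 0")
  case True
  then show ?thesis using u by (simp add: pois_quantile_def pois_cdf_pG pG_zero)
next
  case False
  define S where "S = {x. u \<le> pois_cdf mu x}"
  have q: "pois_quantile mu u = Inf S" using False by (simp add: pois_quantile_def S_def)
  have "eventually (\<lambda>k. u < pois_cdf mu k) sequentially"
    using order_tendstoD(1)[OF pois_cdf_lim u(2)] .
  then obtain k0 where "u < pois_cdf mu k0" by (auto simp: eventually_sequentially)
  then have ne: "S \<noteq> {}" unfolding S_def using less_imp_le by blast
  have inS: "Inf S \<in> S" using ne by (rule Inf_nat_def1)
  show ?thesis
  proof
    assume "pois_quantile mu u \<le> k"
    then show "u \<le> pois_cdf mu k"
      using inS q pois_cdf_mono[of "Inf S" k mu] by (auto simp: S_def)
  next
    assume "u \<le> pois_cdf mu k"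
    then have "k \<in> S" by (simp add: S_def)
    then show "pois_quantile mu u \<le> k" using q by (simp add: cInf_lower)
  qed
qed

lemma measurable_pois_quantile[measurable]:
  "pois_quantile mu \<in> measurable borel (count_space UNIV)"
proof (cases "mu = 0")
  case True
  then show ?thesis by (simp add: pois_quantile_def[abs_def])
next
  case False
  have "pois_quantile mu = (\<lambda>u. LEAST n. u \<le> pois_cdf mu n)"
    using False by (simp add: fun_eq_iff pois_quantile_def Inf_nat_def)
  then show ?thesis by simp
qed

lemma real_le_floor_iff: "0 \<le> x \<Longrightarrow> real n \<le> x \<longleftrightarrow> n \<le> nat \<lfloor>x\<rfloor>"
  by (metis floor_of_nat le_floor_iff le_nat_iff of_int_of_nat_eq zero_le_floor)

lemma null_01: "{0::real, 1} \<in> null_sets lborel"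
  by (intro countable_imp_null_set_lborel) auto

lemma section_measure:
  assumes m: "0 \<le> m1" "0 \<le> m2" and x: "0 \<le> x1" "0 \<le> x2"
  shows "emeasure (uniform_measure lborel {0..1::real})
     {u. real (y1 + pois_quantile m1 u) \<le> x1 \<and> real (y2 + pois_quantile m2 (1 - u)) \<le> x2}
   = ennreal (if y1 \<le> nat \<lfloor>x1\<rfloor> \<and> y2 \<le> nat \<lfloor>x2\<rfloor>
        then Wf m1 m2 (nat \<lfloor>x1\<rfloor> - y1) (nat \<lfloor>x2\<rfloor> - y2) else 0)"
proof -
  define a where "a = nat \<lfloor>x1\<rfloor>"
  define b where "b = nat \<lfloor>x2\<rfloor>"
  define T where "T = {u. real (y1 + pois_quantile m1 u) \<le> x1 \<and> real (y2 + pois_quantile m2 (1 - u)) \<le> x2}"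
  have T_eq: "T = {u. y1 + pois_quantile m1 u \<le> a \<and> y2 + pois_quantile m2 (1 - u) \<le> b}"
    unfolding T_def a_def b_def using x by (simp add: real_le_floor_iff del: of_nat_add)
  have Tm: "T \<in> sets borel" unfolding T_eq by measurable
  have "emeasure (uniform_measure lborel {0..1::real}) T = emeasure lborel ({0..1} \<inter> T)"
    using Tm by (simp add: divide_ennreal_def)
  also have "\<dots> = ennreal (if y1 \<le> a \<and> y2 \<le> b then Wf m1 m2 (a - y1) (b - y2) else 0)"
  proof (cases "y1 \<le> a \<and> y2 \<le> b")
    case False
    then have "T = {}" unfolding T_eq by auto
    then show ?thesis using False by auto
  next
    case True
    define hi where "hi = pG m1 (a - y1)"
    define lo where "lo = 1 - pG m2 (b - y2)"
    have hi1: "hi \<le> 1" "0 \<le> lo" unfolding hi_def lo_def using m by (auto intro!: pG_le1)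
    have mem: "u \<in> T \<longleftrightarrow> lo \<le> u \<and> u \<le> hi" if "0 < u" "u < 1" for u
    proof -
      have "y1 + pois_quantile m1 u \<le> a \<longleftrightarrow> pois_quantile m1 u \<le> a - y1" using True by auto
      also have "\<dots> \<longleftrightarrow> u \<le> hi" unfolding hi_def using pois_quantile_iff[OF m(1) that] m
        by (simp add: pois_cdf_pG)
      finally have 1: "y1 + pois_quantile m1 u \<le> a \<longleftrightarrow> u \<le> hi" .
      have "y2 + pois_quantile m2 (1 - u) \<le> b \<longleftrightarrow> pois_quantile m2 (1 - u) \<le> b - y2" using True by auto
      also have "\<dots> \<longleftrightarrow> 1 - u \<le> pG m2 (b - y2)" using pois_quantile_iff[OF m(2), of "1 - u"] that m
        by (simp add: pois_cdf_pG)
      also have "\<dots> \<longleftrightarrow> lo \<le> u" unfolding lo_def by auto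
      finally show ?thesis using 1 unfolding T_eq by auto
    qed
    have sub1: "{0..1} \<inter> T \<subseteq> {lo..hi} \<union> {0, 1}"
    proof
      fix u assume "u \<in> {0..1} \<inter> T"
      then show "u \<in> {lo..hi} \<union> {0, 1}" using mem[of u] by (cases "u = 0 \<or> u = 1") auto
    qed
    have sub2: "{lo..hi} - {0, 1} \<subseteq> {0..1} \<inter> T"
    proof
      fix u assume u: "u \<in> {lo..hi} - {0, 1}"
      then have "0 < u" "u < 1" using hi1 by auto
      then show "u \<in> {0..1} \<inter> T" using mem[of u] u by auto
    qed
    have e1: "emeasure lborel ({lo..hi} \<union> {0, 1}) = emeasure lborel {lo..hi}"
      by (intro emeasure_Un_null_set null_01) auto
    have e2: "emeasure lborel ({lo..hi} - {0, 1}) = emeasure lborel {lo..hi}"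
      by (intro emeasure_Diff_null_set null_01) auto
    have "emeasure lborel ({0..1} \<inter> T) \<le> emeasure lborel {lo..hi}"
      using emeasure_mono[OF sub1, of lborel] e1 by simp
    moreover have "emeasure lborel {lo..hi} \<le> emeasure lborel ({0..1} \<inter> T)"
      using emeasure_mono[OF sub2, of lborel] e2 Tm by simp
    ultimately have "emeasure lborel ({0..1} \<inter> T) = emeasure lborel {lo..hi}" by simp
    also have "\<dots> = ennreal (Wf m1 m2 (a - y1) (b - y2))"
      unfolding emeasure_lborel_Icc_eq Wf_def hi_def lo_def by (auto simp: max_def ennreal_neg)
    finally show ?thesis using True by simp
  qed
  finally show ?thesis unfolding T_def a_def b_def .
qed

lemma Wf_nonneg: "0 \<le> Wf m1 m2 c d" by (simp add: Wf_def)

lemma H_formula: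
  assumes L: "0 < L1" "0 < L2" and phi: "0 \<le> phi" "phi \<le> 1" and t: "0 \<le> t" "t \<le> 1"
    and x: "0 \<le> x1" "0 \<le> x2"
  shows "H_minus (L1, L2) phi t x1 x2 = phi + (1 - phi) * St L1 L2 t (nat \<lfloor>x1\<rfloor>) (nat \<lfloor>x2\<rfloor>)"
proof -
  define a where "a = nat \<lfloor>x1\<rfloor>"
  define b where "b = nat \<lfloor>x2\<rfloor>"
  define N where "N = uniform_measure lborel {0..1::real}"
  interpret N: prob_space N unfolding N_def by (intro prob_space_uniform_measure) auto
  define B where "B = bernoulli_pmf (1 - phi)"
  define R where "R = pair_pmf (pois ((1 - t) * L1)) (pois ((1 - t) * L2))"
  define M where "M = measure_pmf (pair_pmf B R)"
  define P where "P z u = (real (fst (bzip_minus_rv (L1, L2) t (z, u))) \<le> x1 \<and>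
      real (snd (bzip_minus_rv (L1, L2) t (z, u))) \<le> x2)" for z u
  define Wg where "Wg y = (if fst y \<le> a \<and> snd y \<le> b then Wf (t * L1) (t * L2) (a - fst y) (b - snd y) else 0)" for y
  have sp: "space (bzip_space (L1,L2) t phi) = UNIV" by (simp add: bzip_space_def space_pair_measure)
  have bz: "bzip_space (L1,L2) t phi = M \<Otimes>\<^sub>M N" by (simp add: bzip_space_def B_def R_def N_def M_def)
  have HA: "H_minus (L1,L2) phi t x1 x2 = measure (M \<Otimes>\<^sub>M N) {\<omega>. P (fst \<omega>) (snd \<omega>)}"
    unfolding H_minus_def sp by (simp add: bz P_def)
  have Pm: "(\<lambda>\<omega>. P (fst \<omega>) (snd \<omega>)) \<in> measurable (M \<Otimes>\<^sub>M N) (count_space UNIV)"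
  proof (rule measurable_compose_countable'[where f="\<lambda>z \<omega>. P z (snd \<omega>)" and g=fst and I=UNIV])
    fix z :: "bool \<times> nat \<times> nat"
    obtain w y1 y2 where z: "z = (w, y1, y2)" by (cases z) auto
    have "P z \<in> measurable borel (count_space UNIV)"
      unfolding z P_def bzip_minus_rv_def by (cases w) simp_all
    then have "P z \<in> measurable N (count_space UNIV)"
      unfolding N_def by (simp add: measurable_cong_sets)
    then show "(\<lambda>\<omega>. P z (snd \<omega>)) \<in> measurable (M \<Otimes>\<^sub>M N) (count_space UNIV)"
      by (rule measurable_compose[OF measurable_snd])
  next
    show "fst \<in> measurable (M \<Otimes>\<^sub>M N) (count_space UNIV)"
      using measurable_fst[of M N] unfolding M_def by simp
  qed simp
  have Am: "{\<omega>. P (fst \<omega>) (snd \<omega>)} \<in> sets (M \<Otimes>\<^sub>M N)"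
    using measurable_sets[OF Pm, of "{True}"] by (simp add: space_pair_measure M_def N_def vimage_def)
  have sec: "emeasure N (Pair z -` {\<omega>. P (fst \<omega>) (snd \<omega>)}) =
      (if fst z then ennreal (Wg (snd z)) else 1)" for z
  proof -
    obtain w y1 y2 where z: "z = (w, y1, y2)" by (cases z) auto
    show ?thesis
    proof (cases w)
      case True
      have "Pair z -` {\<omega>. P (fst \<omega>) (snd \<omega>)} =
        {u. real (y1 + pois_quantile (t * L1) u) \<le> x1 \<and> real (y2 + pois_quantile (t * L2) (1 - u)) \<le> x2}"
        unfolding z P_def bzip_minus_rv_def using True by auto
      then show ?thesis unfolding N_def using section_measure[of "t * L1" "t * L2" x1 x2 y1 y2] L t x True z
        by (simp add: Wg_def a_def b_def)
    next
      case False
      have "Pair z -` {\<omega>. P (fst \<omega>) (snd \<omega>)} = space N"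
        unfolding z P_def bzip_minus_rv_def using False x by (auto simp: N_def)
      then show ?thesis using False z N.emeasure_space_1 by simp
    qed
  qed
  have "emeasure (M \<Otimes>\<^sub>M N) {\<omega>. P (fst \<omega>) (snd \<omega>)} =
      (\<integral>\<^sup>+z. (if fst z then ennreal (Wg (snd z)) else 1) \<partial>M)"
    using N.emeasure_pair_measure_alt[OF Am] sec by simp
  also have "\<dots> = (\<integral>\<^sup>+w. \<integral>\<^sup>+y. (if w then ennreal (Wg y) else 1) \<partial>R \<partial>B)"
    unfolding M_def nn_integral_pair_pmf' by (intro nn_integral_cong) (simp split: if_split)
  also have "\<dots> = (\<integral>\<^sup>+w. (if w then (\<integral>\<^sup>+y. ennreal (Wg y) \<partial>R) else 1) \<partial>B)"
    by (intro nn_integral_cong) (auto simp: measure_pmf.emeasure_space_1)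
  also have "\<dots> = (\<Sum>w\<in>UNIV. (if w then (\<integral>\<^sup>+y. ennreal (Wg y) \<partial>R) else 1) * pmf B w)"
    by (intro nn_integral_measure_pmf_support) auto
  also have "(\<integral>\<^sup>+y. ennreal (Wg y) \<partial>R) = (\<Sum>y\<in>{..a}\<times>{..b}. ennreal (Wg y) * pmf R y)"
    by (intro nn_integral_measure_pmf_support) (auto simp: Wg_def)
  also have "\<dots> = ennreal (\<Sum>y\<in>{..a}\<times>{..b}. Wg y * pmf R y)"
    by (simp add: sum_ennreal[symmetric] ennreal_mult' Wg_def Wf_nonneg)
  finally have E: "emeasure (M \<Otimes>\<^sub>M N) {\<omega>. P (fst \<omega>) (snd \<omega>)} =
     ennreal (\<Sum>y\<in>{..a}\<times>{..b}. Wg y * pmf R y) * ennreal (1 - phi) + ennreal phi"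
    using phi by (simp add: UNIV_bool B_def)
  have S: "(\<Sum>y\<in>{..a}\<times>{..b}. Wg y * pmf R y) = St L1 L2 t a b"
  proof -
    have "(\<Sum>y\<in>{..a}\<times>{..b}. Wg y * pmf R y) =
        (\<Sum>y1\<le>a. \<Sum>y2\<le>b. Wg (y1, y2) * pmf R (y1, y2))"
      by (simp add: sum.cartesian_product)
    also have "\<dots> = St L1 L2 t a b"
      unfolding St_def R_def using L t
      by (auto simp: Wg_def pmf_pair pmf_pois sum_distrib_left mult_ac intro!: sum.cong)
    finally show ?thesis .
  qed
  have S0: "0 \<le> (\<Sum>y\<in>{..a}\<times>{..b}. Wg y * pmf R y)"
    by (intro sum_nonneg mult_nonneg_nonneg) (auto simp: Wg_def Wf_nonneg)
  have "H_minus (L1,L2) phi t x1 x2 = (\<Sum>y\<in>{..a}\<times>{..b}. Wg y * pmf R y) * (1 - phi) + phi"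
    unfolding HA measure_def E using S0 phi
    by (simp add: ennreal_mult'[symmetric] ennreal_plus[symmetric] del: ennreal_plus)
  then show ?thesis using S unfolding a_def b_def by simp
qed

lemma H_neg:
  assumes "x1 < 0 \<or> x2 < 0"
  shows "H_minus Lam phi t x1 x2 = 0"
proof -
  have *: "\<not> (real n \<le> x1 \<and> real m \<le> x2)" for n m :: nat
    using assms of_nat_0_le_iff[of n] of_nat_0_le_iff[of m] by linarith
  have E: "{\<omega> \<in> space (bzip_space Lam t phi).
          real (fst (bzip_minus_rv Lam t \<omega>)) \<le> x1 \<and>
          real (snd (bzip_minus_rv Lam t \<omega>)) \<le> x2} = {}" using * by blast
  show ?thesis unfolding H_minus_def E by simp
qed

theorem corollary2:
  fixes lam1 lam2 phi theta theta' :: real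
  assumes "0 < lam1" and "0 < lam2"
    and "0 \<le> phi" and "phi < 1"
    and "0 \<le> theta" and "theta < theta'" and "theta' \<le> 1"
  shows "\<forall>x1 x2 :: real.
           H_minus (lam1, lam2) phi theta' x1 x2 \<le> H_minus (lam1, lam2) phi theta x1 x2"
proof (intro allI)
  fix x1 x2 :: real
  show "H_minus (lam1, lam2) phi theta' x1 x2 \<le> H_minus (lam1, lam2) phi theta x1 x2"
  proof (cases "x1 < 0 \<or> x2 < 0")
    case True
    then show ?thesis by (simp add: H_neg)
  next
    case False
    then have x: "0 \<le> x1" "0 \<le> x2" by auto
    have "St lam1 lam2 theta' (nat \<lfloor>x1\<rfloor>) (nat \<lfloor>x2\<rfloor>) \<le> St lam1 lam2 theta (nat \<lfloor>x1\<rfloor>) (nat \<lfloor>x2\<rfloor>)"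
      using assms by (intro St_mono) auto
    then have "phi + (1 - phi) * St lam1 lam2 theta' (nat \<lfloor>x1\<rfloor>) (nat \<lfloor>x2\<rfloor>)
        \<le> phi + (1 - phi) * St lam1 lam2 theta (nat \<lfloor>x1\<rfloor>) (nat \<lfloor>x2\<rfloor>)"
      using assms by (simp add: mult_left_mono)
    then show ?thesis
      using assms x by (simp add: H_formula)
  qed
qed

end
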